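(* Let $S$ be a string and let $i<j<k$ be positions such that $S[i\mathinner{.\,.}i']$, $S[j\mathinner{.\,.}j']$ and $S[k\mathinner{.\,.}k']$ are runs of $S$ having the same (smallest) period. Then $k>i'$.
   Context: An integer $p>0$ is a period of a string $P$ if $P[t]=P[t+p]$ for all $t\in[0,|P|-p)$; $\mathsf{per}(P)$ is the smallest period of $P$. A fragment $F=S[a\mathinner{.\,.}b]$ of $S$ is a run of $S$ if $\mathsf{per}(F)\leq |F|/2$ and $F$ cannot be extended by one position to the left or to the right within $S$ with its smallest period remaining the same. *)

theory Defs
  imports Main
begin

text \<open>Strings are lists; positions are 0-based; fragments are inclusive.\<close>

definition is_period :: "'a list \<Rightarrow> nat \<Rightarrow> bool" where
  "is_period P p \<longleftrightarrow> p > 0 \<and> (\<forall>t. t + p < length P \<longrightarrow> P ! t = P ! (t + p))"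

definition per :: "'a list \<Rightarrow> nat" where
  "per P = (LEAST p. is_period P p)"

definition frag :: "'a list \<Rightarrow> nat \<Rightarrow> nat \<Rightarrow> 'a list" where
  "frag S a b = take (Suc b - a) (drop a S)"

definition is_run :: "'a list \<Rightarrow> nat \<Rightarrow> nat \<Rightarrow> bool" where
  "is_run S a b \<longleftrightarrow> a \<le> b \<and> b < length S
     \<and> 2 * per (frag S a b) \<le> length (frag S a b)
     \<and> (a = 0 \<or> per (frag S (a - 1) b) \<noteq> per (frag S a b))
     \<and> (Suc b = length S \<or> per (frag S a (Suc b)) \<noteq> per (frag S a b))"

end

theory Submission
  imports Defs
begin

lemma len_frag: "b < length S \<Longrightarrow> length (frag S a b) = Suc b - a"
  by (simp add: frag_def)

lemma nth_frag: "b < length S \<Longrightarrow> t < Suc b - a \<Longrightarrow> frag S a b ! t = S ! (a + t)"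
  by (simp add: frag_def)

lemma is_period_frag:
  assumes "b < length S"
  shows "is_period (frag S a b) p \<longleftrightarrow> p > 0 \<and> (\<forall>t. a \<le> t \<and> t + p \<le> b \<longrightarrow> S ! t = S ! (t + p))"
proof
  assume h: "is_period (frag S a b) p"
  show "p > 0 \<and> (\<forall>t. a \<le> t \<and> t + p \<le> b \<longrightarrow> S ! t = S ! (t + p))"
  proof (intro conjI allI impI)
    show "p > 0" using h by (simp add: is_period_def)
    fix t assume t: "a \<le> t \<and> t + p \<le> b"
    have "frag S a b ! (t - a) = frag S a b ! (t - a + p)"
      using h t assms by (auto simp: is_period_def len_frag)
    moreover have "frag S a b ! (t - a) = S ! t" using t assms h by (subst nth_frag) auto
    moreover have "frag S a b ! (t - a + p) = S ! (t + p)" using t assms h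
      by (subst nth_frag) auto
    ultimately show "S ! t = S ! (t + p)" by simp
  qed
next
  assume h: "p > 0 \<and> (\<forall>t. a \<le> t \<and> t + p \<le> b \<longrightarrow> S ! t = S ! (t + p))"
  show "is_period (frag S a b) p"
    unfolding is_period_def
  proof (intro conjI allI impI)
    show "p > 0" using h by simp
    fix t assume t: "t + p < length (frag S a b)"
    then have "a + t + p \<le> b" using assms h by (simp add: len_frag)
    then have "S ! (a + t) = S ! (a + t + p)" using h by simp
    then show "frag S a b ! t = frag S a b ! (t + p)"
      using t assms by (simp add: nth_frag len_frag add.assoc)
  qed
qed

lemma per_is_period: "is_period P (per P)"
proof -
  have "is_period P (Suc (length P))" by (simp add: is_period_def)
  then show ?thesis unfolding per_def by (rule LeastI)
qed

lemma per_le: "is_period P q \<Longrightarrow> per P \<le> q"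
  unfolding per_def by (rule Least_le)

lemma ext_contra:
  assumes run: "is_run S c d" and ac: "a < c" and bl: "b < length S"
    and pa: "is_period (frag S a b) (per (frag S c d))"
    and ov: "c + per (frag S c d) \<le> Suc b"
  shows False
proof -
  let ?p = "per (frag S c d)"
  have dl: "d < length S" and cd: "c \<le> d" using run by (auto simp: is_run_def)
  have pc: "?p > 0 \<and> (\<forall>t. c \<le> t \<and> t + ?p \<le> d \<longrightarrow> S ! t = S ! (t + ?p))"
    using per_is_period[of "frag S c d"] is_period_frag[OF dl] by blast
  have pab: "\<forall>t. a \<le> t \<and> t + ?p \<le> b \<longrightarrow> S ! t = S ! (t + ?p)"
    using pa is_period_frag[OF bl] by blast
  have big: "is_period (frag S (c - 1) d) ?p"
    unfolding is_period_frag[OF dl]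
  proof (intro conjI allI impI)
    show "?p > 0" using pc by simp
    fix t assume t: "c - 1 \<le> t \<and> t + ?p \<le> d"
    show "S ! t = S ! (t + ?p)"
    proof (cases "t = c - 1")
      case True
      have "a \<le> c - 1 \<and> c - 1 + ?p \<le> b" using ac ov by auto
      then have "S ! (c - 1) = S ! (c - 1 + ?p)" using pab by blast
      moreover have "c - 1 + ?p = t + ?p" using True by simp
      ultimately show ?thesis using True by simp
    next
      case False
      then have "c \<le> t \<and> t + ?p \<le> d" using t by auto
      then show ?thesis using pc by blast
    qed
  qed
  have le1: "per (frag S (c - 1) d) \<le> ?p"
    by (rule per_le[OF big])
  have pb: "is_period (frag S (c - 1) d) (per (frag S (c - 1) d))" by (rule per_is_period)
  have "is_period (frag S c d) (per (frag S (c - 1) d))"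
    using pb unfolding is_period_frag[OF dl] by auto
  then have le2: "?p \<le> per (frag S (c - 1) d)"
    by (rule per_le)
  have "per (frag S (c - 1) d) \<noteq> ?p" using run ac by (auto simp: is_run_def)
  with le1 le2 show False by simp
qed

theorem lemma2:
  fixes S :: "'a list" and i i' j j' k k' :: nat
  assumes "i < j" and "j < k"
    and "is_run S i i'" and "is_run S j j'" and "is_run S k k'"
    and "per (frag S i i') = per (frag S j j')"
    and "per (frag S j j') = per (frag S k k')"
  shows "k > i'"
proof (rule ccontr)
  assume nk: "\<not> k > i'"
  let ?p = "per (frag S j j')"
  have il: "i' < length S" and jl: "j' < length S" and jj: "j \<le> j'"
    using assms by (auto simp: is_run_def)
  have lj: "2 * ?p \<le> Suc j' - j" using assms(4) by (auto simp: is_run_def len_frag)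
  have pi: "is_period (frag S i i') ?p" using per_is_period[of "frag S i i'"] assms(6) by simp
  have pj: "is_period (frag S j j') (per (frag S k k'))" using per_is_period[of "frag S j j'"] assms(7) by simp
  show False
  proof (cases "j + ?p \<le> Suc i'")
    case True
    show False by (rule ext_contra[OF assms(4) assms(1) il pi True])
  next
    case False
    have "k + per (frag S k k') \<le> Suc j'" using False nk lj assms(7) jj by arith
    then show False by (rule ext_contra[OF assms(5) assms(2) jl pj])
  qed
qed

end
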